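(* For $k\ge2$, the minimum Hamming distance of $\mathcal{S}_k^\beta$ is $d_H(\mathcal{S}_k^\beta)=L_\beta(k)-q^{s-1}L_\beta(k-1)=q^{s(k-1)}$, where $L_\beta(m)=q^{(s-1)(m-1)}\frac{q^m-1}{q-1}$.
   Context: Let $R$ be a finite commutative chain ring with maximal ideal $\langle\gamma\rangle$, nilpotency index $s$ and residue field $R/\langle\gamma\rangle\cong\mathbb{F}_q$. Fix coset representatives $T=\{e_0,\dots,e_{q-1}\}$ with $e_0=0,e_1=1$, ordered $e_0<\dots<e_{q-1}$; each $r\in R$ is uniquely $\sum_{i=0}^{s-1}r_i\gamma^i$, $r_i\in T$; order $R$ by $x>y$ iff $x_i>y_i$ in $T$ for the largest $i$ with $x_i\neq y_i$; list $R=\{\rho_0,\dots,\rho_{q^s-1}\}$ increasingly. $\mathbf{a}^{(m)}$ is the constant vector of length $m$. Define $G_1^\alpha=(\rho_0\ \cdots\ \rho_{q^s-1})$ and, for $k>1$, $G_k^\alpha$ as the matrix of $q^s$ column blocks, the $j$-th having first row $\boldsymbol{\rho_j}^{(q^{s(k-1)})}$ and $G_{k-1}^\alpha$ below. List $\langle\gamma\rangle$ increasingly as $a_0\gamma<\dots<a_{q^{s-1}-1}\gamma$. Define $G_1^\beta=(1)$ and, for $k>1$, $G_k^\beta$ as the matrix with column blocks: first a block with first row $\mathbf{1}^{(q^{s(k-1)})}$ and $G_{k-1}^\alpha$ below; then for each $j=0,\dots,q^{s-1}-1$ a block with first row the constant vector with entry $a_j\gamma$ and $G_{k-1}^\beta$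 below. $\mathcal{S}_k^\beta$ is the $R$-submodule generated by the rows of $G_k^\beta$. The minimum Hamming distance of a code is the minimum Hamming distance (number of differing coordinates) between two distinct codewords. *)

theory Defs
  imports Main
begin

definition is_ideal :: "'a::comm_ring_1 set \<Rightarrow> bool" where
  "is_ideal I \<longleftrightarrow> 0 \<in> I \<and> (\<forall>x\<in>I. \<forall>y\<in>I. x + y \<in> I) \<and> (\<forall>r. \<forall>x\<in>I. r * x \<in> I)"

definition principal_ideal :: "'a::comm_ring_1 \<Rightarrow> 'a set" where
  "principal_ideal g = range (\<lambda>r. r * g)"

definition maximal_ideal :: "'a::comm_ring_1 set \<Rightarrow> bool" where
  "maximal_ideal I \<longleftrightarrow> is_ideal I \<and> I \<noteq> UNIV \<and>
     (\<forall>J. is_ideal J \<longrightarrow> I \<subseteq> J \<longrightarrow> J = I \<or> J = UNIV)"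

definition chain_ring :: "'a::comm_ring_1 itself \<Rightarrow> bool" where
  "chain_ring TYPE('a) \<longleftrightarrow>
     (\<forall>I J :: 'a set. is_ideal I \<longrightarrow> is_ideal J \<longrightarrow> I \<subseteq> J \<or> J \<subseteq> I)"

text \<open>The coset representatives are e 0 < e 1 < ... < e (q-1) (the order on T is the
  index order). The digits of x are the indices d i with x = sum_{i<s} e(d i) * g^i.\<close>
definition digits :: "'a::comm_ring_1 \<Rightarrow> nat \<Rightarrow> nat \<Rightarrow> (nat \<Rightarrow> 'a) \<Rightarrow> 'a \<Rightarrow> nat \<Rightarrow> nat" where
  "digits g s q e x = (THE d. (\<forall>i. d i < q) \<and> (\<forall>i. s \<le> i \<longrightarrow> d i = 0) \<and>
                           x = (\<Sum>i<s. e (d i) * g ^ i))"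

definition ring_less :: "'a::comm_ring_1 \<Rightarrow> nat \<Rightarrow> nat \<Rightarrow> (nat \<Rightarrow> 'a) \<Rightarrow> 'a \<Rightarrow> 'a \<Rightarrow> bool" where
  "ring_less g s q e x y \<longleftrightarrow> x \<noteq> y \<and>
     (let i = (GREATEST i. digits g s q e x i \<noteq> digits g s q e y i)
      in digits g s q e x i < digits g s q e y i)"

definition rho :: "'a::{comm_ring_1,finite} \<Rightarrow> nat \<Rightarrow> nat \<Rightarrow> (nat \<Rightarrow> 'a) \<Rightarrow> nat \<Rightarrow> 'a" where
  "rho g s q e j = (THE x. card {y. ring_less g s q e y x} = j)"

text \<open>agam j: the j-th element (0-based) of the ideal <g> in increasing order, i.e. a_j g.\<close>
definition agam :: "'a::{comm_ring_1,finite} \<Rightarrow> nat \<Rightarrow> nat \<Rightarrow> (nat \<Rightarrow> 'a) \<Rightarrow> nat \<Rightarrow> 'a" where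
  "agam g s q e j = (THE x. x \<in> principal_ideal g \<and>
       card {y \<in> principal_ideal g. ring_less g s q e y x} = j)"

section \<open>Generator matrices (as functions row \<Rightarrow> column \<Rightarrow> entry, 0-based)\<close>

text \<open>Galpha rh N k: the k x N^k matrix G_k^alpha, with N = q^s and rh = rho.\<close>
fun Galpha :: "(nat \<Rightarrow> 'a) \<Rightarrow> nat \<Rightarrow> nat \<Rightarrow> nat \<Rightarrow> nat \<Rightarrow> 'a" where
  "Galpha rh N 0 r c = undefined"
| "Galpha rh N (Suc 0) r c = rh c"
| "Galpha rh N (Suc (Suc k)) r c =
     (if r = 0 then rh (c div N ^ Suc k)
      else Galpha rh N (Suc k) (r - 1) (c mod N ^ Suc k))"

text \<open>Number of columns of G_k^beta (N = q^s, M = q^(s-1) = |<g>|).\<close>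
fun nbeta :: "nat \<Rightarrow> nat \<Rightarrow> nat \<Rightarrow> nat" where
  "nbeta N M 0 = 0"
| "nbeta N M (Suc 0) = 1"
| "nbeta N M (Suc (Suc k)) = N ^ Suc k + M * nbeta N M (Suc k)"

fun Gbeta :: "(nat \<Rightarrow> 'a::comm_ring_1) \<Rightarrow> (nat \<Rightarrow> 'a) \<Rightarrow> nat \<Rightarrow> nat \<Rightarrow> nat \<Rightarrow> nat \<Rightarrow> nat \<Rightarrow> 'a" where
  "Gbeta rh ag N M 0 r c = undefined"
| "Gbeta rh ag N M (Suc 0) r c = 1"
| "Gbeta rh ag N M (Suc (Suc k)) r c =
     (if c < N ^ Suc k then
        (if r = 0 then 1 else Galpha rh N (Suc k) (r - 1) c)
      else
        (let c' = c - N ^ Suc k; j = c' div nbeta N M (Suc k); off = c' mod nbeta N M (Suc k)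
         in if r = 0 then ag j else Gbeta rh ag N M (Suc k) (r - 1) off))"

definition row_span :: "(nat \<Rightarrow> nat \<Rightarrow> 'a::comm_ring_1) \<Rightarrow> nat \<Rightarrow> nat \<Rightarrow> 'a list set" where
  "row_span G k n = {map (\<lambda>c. \<Sum>r<k. l r * G r c) [0..<n] | l. True}"

definition hamming :: "'a list \<Rightarrow> 'a list \<Rightarrow> nat" where
  "hamming x y = card {i. i < length x \<and> x ! i \<noteq> y ! i}"

definition min_dist :: "'a list set \<Rightarrow> nat" where
  "min_dist C = Min {hamming x y | x y. x \<in> C \<and> y \<in> C \<and> x \<noteq> y}"

definition S_beta :: "'a::{comm_ring_1,finite} \<Rightarrow> nat \<Rightarrow> nat \<Rightarrow> (nat \<Rightarrow> 'a) \<Rightarrow> nat \<Rightarrow> 'a list set" where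
  "S_beta g s q e k =
     row_span (Gbeta (rho g s q e) (agam g s q e) (q ^ s) (q ^ (s - 1)) k) k
              (nbeta (q ^ s) (q ^ (s - 1)) k)"

definition L_beta :: "nat \<Rightarrow> nat \<Rightarrow> nat \<Rightarrow> nat" where
  "L_beta q s m = q ^ ((s - 1) * (m - 1)) * ((q ^ m - 1) div (q - 1))"

end

theory Submission
  imports Defs
begin


lemma PI_dvd: "x \<in> principal_ideal g \<longleftrightarrow> g dvd x"
  unfolding principal_ideal_def dvd_def by (auto simp: mult.commute)

locale cr =
  fixes g :: "'a::{comm_ring_1,finite}" and s q :: nat and e :: "nat \<Rightarrow> 'a"
  assumes maxg: "maximal_ideal (principal_ideal g)"
  and nil1: "g^s = 0" and nil2: "g^(s-1) \<noteq> 0"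
  and reps: "\<forall>x. \<exists>!i. i<q \<and> x - e i \<in> principal_ideal g"
  and e0: "e 0 = 0" and e1: "e 1 = 1"
begin

lemma reps': "\<exists>!i. i<q \<and> g dvd (x - e i)"
  using reps by (simp add: PI_dvd)

lemma not_dvd_1: "\<not> g dvd 1"
proof
  assume "g dvd 1"
  then have "\<forall>x. g dvd x" by (meson dvd_trans one_dvd)
  then have "principal_ideal g = UNIV" by (auto simp: PI_dvd)
  with maxg show False by (simp add: maximal_ideal_def)
qed

lemma s_pos: "s > 0"
proof (rule ccontr)
  assume "\<not> s > 0"
  then have "(1::'a) = 0" using nil1 by simp
  then show False using not_dvd_1 by (metis dvd_0_right)
qed

lemma unit: assumes "\<not> g dvd x" shows "x dvd 1"
proof -
  define J where "J = {a*x + b*g | a b. True}"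
  have idJ: "is_ideal J" unfolding is_ideal_def J_def
  proof (intro conjI ballI allI)
    have "(0::'a) = 0 * x + 0 * g" by simp
    then show "0 \<in> {a * x + b * g |a b. True}" by blast
  next
    fix u v assume "u \<in> {a * x + b * g |a b. True}" "v \<in> {a * x + b * g |a b. True}"
    then obtain a b a' b' where "u = a*x+b*g" "v = a'*x+b'*g" by auto
    then have "u + v = (a+a')*x + (b+b')*g" by (simp add: algebra_simps)
    then show "u + v \<in> {a * x + b * g |a b. True}" by blast
  next
    fix r u assume "u \<in> {a * x + b * g |a b. True}"
    then obtain a b where "u = a*x+b*g" by auto
    then have "r * u = (r*a)*x + (r*b)*g" by (simp add: algebra_simps)
    then show "r * u \<in> {a * x + b * g |a b. True}" by blast
  qed
  have sub: "principal_ideal g \<subseteq> J"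
  proof
    fix y assume "y \<in> principal_ideal g"
    then obtain r where "y = r * g" by (auto simp: principal_ideal_def)
    then have "y = 0*x + r*g" by simp
    then show "y \<in> J" unfolding J_def by blast
  qed
  have "x \<in> J" unfolding J_def by (rule CollectI, rule exI[of _ 1], rule exI[of _ 0], simp)
  moreover have "x \<notin> principal_ideal g" using assms by (simp add: PI_dvd)
  ultimately have "J \<noteq> principal_ideal g" by blast
  with maxg idJ sub have "J = UNIV" unfolding maximal_ideal_def by blast
  then have "1 \<in> J" by simp
  then obtain a b where ab: "1 = a*x + b*g" unfolding J_def by blast
  have z: "(b*g)^s = 0" using nil1 by (simp add: power_mult_distrib)
  have "(1 - b*g) * (\<Sum>i<s. (b*g)^i) = 1 - (b*g)^s" by (rule one_diff_power_eq[symmetric])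
  also have "\<dots> = 1" by (simp only: z diff_zero)
  finally have calc: "(1 - b*g) * (\<Sum>i<s. (b*g)^i) = 1" .
  have "a*x = (a*x + b*g) - b*g" by simp
  also have "\<dots> = 1 - b*g" by (simp only: ab[symmetric])
  finally have ax: "a*x = 1 - b*g" .
  have "x * (a * (\<Sum>i<s. (b*g)^i)) = (a*x) * (\<Sum>i<s. (b*g)^i)" by (simp only: ac_simps)
  also have "\<dots> = 1" unfolding ax by (rule calc)
  finally have "1 = x * (a * (\<Sum>i<s. (b*g)^i))" by (rule sym)
  then show ?thesis by (rule dvdI)
qed

lemma nonzero: assumes "\<not> g dvd u" "t < s" shows "g^t * u \<noteq> 0"
proof
  assume h: "g^t * u = 0"
  obtain w where "u * w = 1" using unit[OF assms(1)] by (auto simp: dvd_def)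
  then have "g^t = g^t * u * w" by (simp add: mult.assoc)
  with h have "g^t = 0" by simp
  then have "g^(s-1-t) * g^t = 0" by simp
  then have "g^(s-1) = 0" using assms(2) by (simp add: power_add[symmetric])
  with nil2 show False by simp
qed

lemma peel: assumes "n < s" "g^(Suc n) dvd r * g^n" shows "g dvd r"
proof (rule ccontr)
  assume nd: "\<not> g dvd r"
  obtain t where "r * g^n = g^(Suc n) * t" using assms(2) by (auto simp: dvd_def)
  then have "g^n * (r - g*t) = 0" by (simp add: algebra_simps)
  moreover have "\<not> g dvd (r - g*t)"
    using nd by (metis diff_add_cancel dvd_add dvd_triv_left)
  ultimately show False using nonzero assms(1) by blast
qed

lemma e_inj: assumes "i < q" "j < q" "g dvd (e i - e j)" shows "i = j"
  using reps'[of "e i"] assms by auto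

lemma q_ge2: "q \<ge> 2"
proof -
  obtain i where i: "i < q" "g dvd (1 - e i)" using reps'[of 1] by auto
  have "i \<noteq> 0" proof assume "i = 0" then show False using i not_dvd_1 e0 by simp qed
  with i show ?thesis by linarith
qed

definition P :: "nat \<Rightarrow> 'a set" where "P j = {x. g^j dvd x}"

lemma card_P_step: assumes "j < s" shows "card (P j) = q * card (P (Suc j))"
proof -
  have "bij_betw (\<lambda>(i,y). e i * g^j + y) ({..<q} \<times> P (Suc j)) (P j)"
  proof (rule bij_betwI')
    fix a b assume "a \<in> {..<q} \<times> P (Suc j)" "b \<in> {..<q} \<times> P (Suc j)"
    then obtain i y i' y' where ab: "a = (i,y)" "b = (i',y')" "i < q" "i' < q"
       "g^Suc j dvd y" "g^Suc j dvd y'" by (auto simp: P_def)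
    show "((\<lambda>(i,y). e i * g^j + y) a = (\<lambda>(i,y). e i * g^j + y) b) = (a = b)"
    proof
      assume "(\<lambda>(i,y). e i * g^j + y) a = (\<lambda>(i,y). e i * g^j + y) b"
      then have eq: "e i * g^j + y = e i' * g^j + y'" using ab by simp
      then have "(e i - e i') * g^j = y' - y" by (simp add: algebra_simps)
      then have "g^Suc j dvd (e i - e i') * g^j" using ab by (simp add: dvd_diff)
      then have "g dvd (e i - e i')" using peel assms by blast
      then have "i = i'" using e_inj ab by blast
      then show "a = b" using eq ab by simp
    qed simp
  next
    fix a assume "a \<in> {..<q} \<times> P (Suc j)"
    then show "(\<lambda>(i,y). e i * g^j + y) a \<in> P j"
      by (auto simp: P_def dvd_add)
  next
    fix x assume "x \<in> P j"
    then obtain r where r: "x = g^j * r" by (auto simp: P_def dvd_def)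
    obtain i where i: "i < q" "g dvd (r - e i)" using reps'[of r] by auto
    then obtain t where t: "r - e i = g * t" by (auto simp: dvd_def)
    have "x = e i * g^j + g^Suc j * t" using r t
      by (simp add: algebra_simps)
    then show "\<exists>a\<in>{..<q} \<times> P (Suc j). x = (\<lambda>(i,y). e i * g^j + y) a"
      using i unfolding P_def by (intro bexI[of _ "(i, g^Suc j * t)"]) auto
  qed
  then have "card (P j) = card ({..<q} \<times> P (Suc j))" by (simp add: bij_betw_same_card)
  then show ?thesis by (simp add: card_cartesian_product)
qed

lemma card_P: "j \<le> s \<Longrightarrow> card (P j) = q ^ (s - j)"
proof (induction "s - j" arbitrary: j)
  case 0
  then have "j = s" by simp
  then have "P j = {0}" using nil1 by (auto simp: P_def)
  then show ?case using 0 by simp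
next
  case (Suc m)
  then have "j < s" by simp
  then have "card (P j) = q * card (P (Suc j))" by (rule card_P_step)
  also have "card (P (Suc j)) = q ^ (s - Suc j)" using Suc by simp
  finally show ?case using Suc(2) by (simp add: Suc_diff_Suc flip: power_Suc)
qed

lemma card_UNIV_R: "card (UNIV::'a set) = q ^ s"
  using card_P[of 0] by (simp add: P_def)

lemma card_I: "card {x. g dvd x} = q ^ (s - 1)"
  using card_P[of 1] s_pos by (simp add: P_def)

end


lemma rank_bij:
  assumes fin: "finite A"
    and irr: "\<And>x. x \<in> A \<Longrightarrow> \<not> lt x x"
    and tr: "\<And>x y z. x \<in> A \<Longrightarrow> y \<in> A \<Longrightarrow> z \<in> A \<Longrightarrow> lt x y \<Longrightarrow> lt y z \<Longrightarrow> lt x z"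
    and tot: "\<And>x y. x \<in> A \<Longrightarrow> y \<in> A \<Longrightarrow> x \<noteq> y \<Longrightarrow> lt x y \<or> lt y x"
  shows "bij_betw (\<lambda>x. card {y\<in>A. lt y x}) A {..<card A}"
proof -
  let ?rk = "\<lambda>x. card {y\<in>A. lt y x}"
  have mono: "?rk x < ?rk y" if "x \<in> A" "y \<in> A" "lt x y" for x y
  proof -
    have "{z\<in>A. lt z x} \<subset> {z\<in>A. lt z y}"
      using that irr tr by blast
    then show ?thesis using fin by (intro psubset_card_mono) auto
  qed
  have inj: "inj_on ?rk A"
  proof (rule inj_onI, rule ccontr)
    fix x y assume h: "x \<in> A" "y \<in> A" "?rk x = ?rk y" "x \<noteq> y"
    then show False using tot[of x y] mono[of x y] mono[of y x] by auto
  qed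
  have sub: "?rk ` A \<subseteq> {..<card A}"
  proof
    fix n assume "n \<in> ?rk ` A"
    then obtain x where x: "x \<in> A" "n = ?rk x" by auto
    have "{z\<in>A. lt z x} \<subset> A" using x irr by blast
    then have "card {z\<in>A. lt z x} < card A" using fin by (intro psubset_card_mono)
    then show "n \<in> {..<card A}" using x by simp
  qed
  have "card (?rk ` A) = card {..<card A}" using inj by (simp add: card_image)
  then have "?rk ` A = {..<card A}" using sub by (intro card_subset_eq) auto
  with inj show ?thesis by (simp add: bij_betw_def)
qed

context cr begin

definition dP :: "'a \<Rightarrow> (nat \<Rightarrow> nat) \<Rightarrow> bool" where
  "dP x d \<longleftrightarrow> (\<forall>i. d i < q) \<and> (\<forall>i. s \<le> i \<longrightarrow> d i = 0) \<and> x = (\<Sum>i<s. e (d i) * g^i)"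

lemma dig_exists_aux: "\<exists>d y. (\<forall>i. d i < q) \<and> x = (\<Sum>i<n. e (d i) * g^i) + g^n * y"
proof (induction n)
  case 0
  show ?case using q_ge2 by (intro exI[of _ "\<lambda>_. 0"] exI[of _ x]) auto
next
  case (Suc n)
  then obtain d y where dy: "\<forall>i. d i < q" "x = (\<Sum>i<n. e (d i) * g^i) + g^n * y" by blast
  obtain i where i: "i < q" "g dvd (y - e i)" using reps'[of y] by auto
  then obtain t where t: "y - e i = g * t" by (auto simp: dvd_def)
  have y: "y = e i + g * t" using t by (simp add: algebra_simps)
  define d' where "d' = d(n := i)"
  have "(\<Sum>j<Suc n. e (d' j) * g^j) = (\<Sum>j<n. e (d j) * g^j) + e i * g^n"
    unfolding d'_def by (simp add: sum.lessThan_Suc)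
  then have "x = (\<Sum>j<Suc n. e (d' j) * g^j) + g^Suc n * t"
    using dy(2) y by (simp add: algebra_simps)
  moreover have "\<forall>j. d' j < q" using dy(1) i by (simp add: d'_def)
  ultimately show ?case by blast
qed

lemma dig_exists: "\<exists>d. dP x d"
proof -
  obtain d y where dy: "\<forall>i. d i < q" "x = (\<Sum>i<s. e (d i) * g^i) + g^s * y"
    using dig_exists_aux by blast
  define d' where "d' = (\<lambda>i. if i < s then d i else 0)"
  have "(\<Sum>i<s. e (d' i) * g^i) = (\<Sum>i<s. e (d i) * g^i)" by (simp add: d'_def)
  then show ?thesis using dy nil1 q_ge2 unfolding dP_def
    by (intro exI[of _ d']) (auto simp: d'_def)
qed

lemma dig_unique_aux:
  "n \<le> s \<Longrightarrow> (\<forall>i. d i < q) \<Longrightarrow> (\<forall>i. d' i < q) \<Longrightarrow>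
   g^n dvd ((\<Sum>i<n. e (d i) * g^i) - (\<Sum>i<n. e (d' i) * g^i)) \<Longrightarrow> \<forall>i<n. d i = d' i"
proof (induction n)
  case 0
  then show ?case by simp
next
  case (Suc n)
  define A where "A = (\<Sum>i<n. e (d i) * g^i) - (\<Sum>i<n. e (d' i) * g^i)"
  define B where "B = (e (d n) - e (d' n)) * g^n"
  have eq: "(\<Sum>i<Suc n. e (d i) * g^i) - (\<Sum>i<Suc n. e (d' i) * g^i) = A + B"
    unfolding A_def B_def sum.lessThan_Suc by (simp add: algebra_simps)
  have h: "g^Suc n dvd A + B" using Suc.prems(4) unfolding eq .
  have "g^n dvd g^Suc n" by simp
  then have "g^n dvd A + B" using h by (rule dvd_trans)
  moreover have "g^n dvd B" unfolding B_def by simp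
  ultimately have "g^n dvd A" by (simp add: dvd_add_left_iff)
  moreover have "n \<le> s" using Suc.prems(1) by simp
  ultimately have below: "\<forall>i<n. d i = d' i" using Suc.IH Suc.prems(2,3) unfolding A_def by blast
  then have "(\<Sum>i<n. e (d i) * g^i) = (\<Sum>i<n. e (d' i) * g^i)" by (intro sum.cong refl) auto
  then have "A = 0" unfolding A_def by simp
  then have "g^Suc n dvd B" using h by simp
  then have "g dvd (e (d n) - e (d' n))" unfolding B_def using Suc.prems(1) by (intro peel[of n]) auto
  then have "d n = d' n" using e_inj Suc.prems(2,3) by blast
  with below show ?case by (simp add: less_Suc_eq)
qed

lemma dig_unique: assumes "dP x d" "dP x d'" shows "d = d'"
proof
  fix i
  show "d i = d' i"
  proof (cases "i < s")
    case True
    have "g^s dvd ((\<Sum>i<s. e (d i) * g^i) - (\<Sum>i<s. e (d' i) * g^i))"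
      using assms unfolding dP_def by (metis diff_self dvd_0_right)
    then show ?thesis using dig_unique_aux[of s d d'] assms True unfolding dP_def by blast
  next
    case False
    then show ?thesis using assms unfolding dP_def by simp
  qed
qed

abbreviation dg where "dg \<equiv> digits g s q e"

lemma dg_prop: "dP x (dg x)"
proof -
  have "\<exists>!d. dP x d" using dig_exists dig_unique by blast
  then have "dP x (THE d. dP x d)" by (rule theI')
  then show ?thesis unfolding digits_def dP_def[symmetric] .
qed

lemma dg_inj: "dg x = dg y \<Longrightarrow> x = y"
  using dg_prop[of x] dg_prop[of y] unfolding dP_def by metis

lemma dg_big: "s \<le> i \<Longrightarrow> dg x i = 0"
  using dg_prop[of x] unfolding dP_def by blast

abbreviation rl where "rl \<equiv> ring_less g s q e"

lemma less_char:
  assumes "x \<noteq> y"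
  shows "rl x y \<longleftrightarrow> (\<exists>i. dg x i < dg y i \<and> (\<forall>j>i. dg x j = dg y j))"
proof -
  let ?D = "\<lambda>i. dg x i \<noteq> dg y i"
  obtain i0 where i0: "?D i0" using assms dg_inj by blast
  have bnd: "i \<le> s" if "?D i" for i
  proof (rule ccontr)
    assume "\<not> i \<le> s"
    then have "s \<le> i" by simp
    then show False using that dg_big[of i x] dg_big[of i y] by simp
  qed
  let ?G = "Greatest ?D"
  have G1: "?D ?G" using GreatestI_nat[of ?D i0 s] i0 bnd by blast
  have G2: "\<And>j. ?D j \<Longrightarrow> j \<le> ?G" using Greatest_le_nat[of ?D _ s] bnd by blast
  have "rl x y \<longleftrightarrow> dg x ?G < dg y ?G" unfolding ring_less_def Let_def using assms by simp
  also have "\<dots> \<longleftrightarrow> (\<exists>i. dg x i < dg y i \<and> (\<forall>j>i. dg x j = dg y j))"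
  proof
    assume "dg x ?G < dg y ?G"
    then show "\<exists>i. dg x i < dg y i \<and> (\<forall>j>i. dg x j = dg y j)"
      using G2 by (intro exI[of _ ?G]) (auto simp: not_le[symmetric])
  next
    assume "\<exists>i. dg x i < dg y i \<and> (\<forall>j>i. dg x j = dg y j)"
    then obtain i where i: "dg x i < dg y i" "\<forall>j>i. dg x j = dg y j" by blast
    then have "i \<le> ?G" using G2 by simp
    moreover have "\<not> i < ?G" using i G1 by blast
    ultimately have "i = ?G" by simp
    then show "dg x ?G < dg y ?G" using i by simp
  qed
  finally show ?thesis .
qed

lemma rl_irr: "\<not> rl x x" unfolding ring_less_def by simp

lemma rl_neq: "rl x y \<Longrightarrow> x \<noteq> y" unfolding ring_less_def by simp

lemma rl_tot: "x \<noteq> y \<Longrightarrow> rl x y \<or> rl y x"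
proof -
  assume xy: "x \<noteq> y"
  let ?D = "\<lambda>i. dg x i \<noteq> dg y i"
  obtain i0 where i0: "?D i0" using xy dg_inj by blast
  have bnd: "i \<le> s" if "?D i" for i
  proof (rule ccontr)
    assume "\<not> i \<le> s"
    then have "s \<le> i" by simp
    then show False using that dg_big[of i x] dg_big[of i y] by simp
  qed
  let ?G = "Greatest ?D"
  have G1: "?D ?G" using GreatestI_nat[of ?D i0 s] i0 bnd by blast
  have G2: "dg x j = dg y j" if "?G < j" for j
  proof (rule ccontr)
    assume "dg x j \<noteq> dg y j"
    then have "j \<le> ?G" using Greatest_le_nat[of ?D j s] bnd by blast
    with that show False by simp
  qed
  show ?thesis
  proof (cases "dg x ?G < dg y ?G")
    case True
    then show ?thesis using less_char[OF xy] G2 by auto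
  next
    case False
    then have "dg y ?G < dg x ?G" using G1 by simp
    moreover have "\<forall>j>?G. dg y j = dg x j" using G2 by simp
    moreover have "y \<noteq> x" using xy by simp
    ultimately have "rl y x" using less_char[of y x] by blast
    then show ?thesis by simp
  qed
qed

lemma rl_trans: assumes "rl x y" "rl y z" shows "rl x z"
proof -
  have xy: "x \<noteq> y" and yz: "y \<noteq> z" using assms rl_neq by auto
  obtain i where i: "dg x i < dg y i" "\<forall>j>i. dg x j = dg y j" using assms(1) less_char[OF xy] by blast
  obtain k where k: "dg y k < dg z k" "\<forall>j>k. dg y j = dg z j" using assms(2) less_char[OF yz] by blast
  define m where "m = max i k"
  have m1: "dg x m < dg z m"
    using i k unfolding m_def by (cases "i < k"; cases "k < i") (auto simp: max_def)
  have m2: "\<forall>j>m. dg x j = dg z j" using i k unfolding m_def by simp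
  have "x \<noteq> z" using m1 by auto
  then show ?thesis using less_char m1 m2 by blast
qed

lemma rho_bij: "bij_betw (rho g s q e) {..<q^s} UNIV"
proof -
  have b: "bij_betw (\<lambda>x. card {y\<in>UNIV. rl y x}) UNIV {..<card (UNIV::'a set)}"
  proof (rule rank_bij)
    fix x :: 'a show "\<not> rl x x" by (rule rl_irr)
  next
    fix x y z :: 'a assume "rl x y" "rl y z" then show "rl x z" by (rule rl_trans)
  next
    fix x y :: 'a assume "x \<noteq> y" then show "rl x y \<or> rl y x" by (rule rl_tot)
  qed simp
  have "rho g s q e = the_inv_into UNIV (\<lambda>x. card {y\<in>UNIV. rl y x})"
    by (rule ext) (simp add: rho_def the_inv_into_def)
  then show ?thesis using bij_betw_the_inv_into[OF b] card_UNIV_R by simp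
qed

lemma agam_in: assumes "j < q^(s-1)" shows "g dvd agam g s q e j"
proof -
  let ?A = "principal_ideal g"
  have "?A = {x. g dvd x}" by (auto simp: PI_dvd)
  then have cA: "card ?A = q^(s-1)" using card_I by simp
  have b: "bij_betw (\<lambda>x. card {y\<in>?A. rl y x}) ?A {..<card ?A}"
  proof (rule rank_bij)
    fix x :: 'a show "\<not> rl x x" by (rule rl_irr)
  next
    fix x y z :: 'a assume "rl x y" "rl y z" then show "rl x z" by (rule rl_trans)
  next
    fix x y :: 'a assume "x \<noteq> y" then show "rl x y \<or> rl y x" by (rule rl_tot)
  qed simp
  have "agam g s q e j = the_inv_into ?A (\<lambda>x. card {y\<in>?A. rl y x}) j"
    by (simp add: agam_def the_inv_into_def)
  also have "\<dots> \<in> ?A" using bij_betw_apply[OF bij_betw_the_inv_into[OF b]] assms cA by simp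
  finally show ?thesis by (simp add: PI_dvd)
qed

end


lemma sum_add_split: fixes a b :: nat shows "(\<Sum>c<a+b. f c) = (\<Sum>c<a. f c) + (\<Sum>c<b. (f (a+c)::'b::comm_monoid_add))"
  by (induction b) (simp_all add: add.assoc)

lemma sum_mult_split: fixes a b :: nat shows "(\<Sum>c<a*b. f c) = (\<Sum>i<a. \<Sum>j<b. (f (i*b+j)::'b::comm_monoid_add))"
proof (induction a)
  case 0 then show ?case by simp
next
  case (Suc a)
  have "(\<Sum>c<Suc a*b. f c) = (\<Sum>c<a*b + b. f c)" by (simp add: add.commute)
  also have "\<dots> = (\<Sum>c<a*b. f c) + (\<Sum>j<b. f (a*b+j))" by (rule sum_add_split)
  finally show ?case using Suc by simp
qed

lemma add_eq_shift: "(a + b = c) = (b = c - (a::'a::ab_group_add))"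
  by (metis add_diff_cancel_left' diff_add_cancel add.commute)

lemma cnt_card: fixes n :: nat shows "(\<Sum>c<n. of_bool (P c) :: nat) = card {c. c < n \<and> P c}"
proof -
  have "{..<n} \<inter> {x. P x} = {c. c < n \<and> P c}" by auto
  moreover have "(\<Sum>c\<in>{..<n}. of_bool (P c) :: nat) = of_nat (card ({..<n} \<inter> {x. P x}))"
    by (rule sum_of_bool_eq) simp_all
  ultimately show ?thesis by simp
qed

context cr begin

abbreviation "N \<equiv> q^s"
abbreviation "M \<equiv> q^(s-1)"
abbreviation "rh \<equiv> rho g s q e"
abbreviation "ag \<equiv> agam g s q e"

definition linA :: "nat \<Rightarrow> (nat \<Rightarrow> 'a) \<Rightarrow> nat \<Rightarrow> 'a" where
  "linA n m c = (\<Sum>r<n. m r * Galpha rh N n r c)"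

definition linB :: "nat \<Rightarrow> (nat \<Rightarrow> 'a) \<Rightarrow> nat \<Rightarrow> 'a" where
  "linB k l c = (\<Sum>r<k. l r * Gbeta rh ag N M k r c)"

lemma linA_1: "linA 1 m c = m 0 * rh c"
  by (simp add: linA_def)

lemma linA_Suc: assumes "n \<ge> 1"
  shows "linA (Suc n) m c = m 0 * rh (c div N^n) + linA n (\<lambda>r. m (Suc r)) (c mod N^n)"
proof -
  obtain n' where n: "n = Suc n'" using assms by (cases n) auto
  show ?thesis unfolding linA_def sum.lessThan_Suc_shift n by simp
qed

lemma N_pos: "N > 0" using q_ge2 by simp

lemma card_nondvd: "card {x. \<not> g dvd x} = N - M"
proof -
  have "card {x. \<not> g dvd x} = card (UNIV - {x::'a. g dvd x})"
    by (simp add: set_diff_eq)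
  also have "\<dots> = card (UNIV::'a set) - card {x::'a. g dvd x}"
    by (rule card_Diff_subset) auto
  finally show ?thesis using card_UNIV_R card_I by simp
qed

lemma uniq_sol: assumes "\<not> g dvd u" shows "(\<Sum>x\<in>UNIV. of_bool (u * x = w) :: nat) = 1"
proof -
  obtain v where v: "u * v = 1" using unit[OF assms] by (auto simp: dvd_def)
  have "{x. u * x = w} = {v * w}"
  proof (intro set_eqI iffI)
    fix x assume "x \<in> {x. u * x = w}"
    then have "v * (u * x) = v * w" by simp
    then have "x = v * w" using v by (simp add: mult.assoc[symmetric] mult.commute[of v u])
    then show "x \<in> {v * w}" by simp
  next
    fix x assume "x \<in> {v * w}"
    then show "x \<in> {x. u * x = w}" using v by (simp add: mult.assoc[symmetric])
  qed
  then show ?thesis by (simp add: sum_of_bool_eq)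
qed

lemma sum_rh: "(\<Sum>a<N. F (rh a)) = (\<Sum>x\<in>UNIV. F x)"
  using sum.reindex_bij_betw[OF rho_bij, of F] by simp

lemma UA: "n \<ge> 1 \<Longrightarrow> (\<exists>r<n. \<not> g dvd m r) \<Longrightarrow>
   (\<Sum>c<N^n. of_bool (linA n m c = z) :: nat) = N^(n-1)"
proof (induction n arbitrary: m z)
  case 0 then show ?case by simp
next
  case (Suc n)
  show ?case
  proof (cases "n = 0")
    case True
    then have nd: "\<not> g dvd m 0" using Suc.prems by auto
    have "(\<Sum>c<N^Suc n. of_bool (linA (Suc n) m c = z) :: nat) = (\<Sum>a<N. of_bool (m 0 * rh a = z))"
      using True by (simp add: linA_def)
    also have "\<dots> = (\<Sum>x\<in>UNIV. of_bool (m 0 * x = z))" by (rule sum_rh)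
    also have "\<dots> = 1" using nd by (rule uniq_sol)
    finally show ?thesis using True by simp
  next
    case False
    then have n1: "n \<ge> 1" by simp
    let ?m' = "\<lambda>r. m (Suc r)"
    have "(\<Sum>c<N^Suc n. of_bool (linA (Suc n) m c = z) :: nat)
        = (\<Sum>a<N. \<Sum>b<N^n. of_bool (linA (Suc n) m (a * N^n + b) = z))"
      by (simp only: power_Suc sum_mult_split)
    also have "\<dots> = (\<Sum>a<N. \<Sum>b<N^n. of_bool (m 0 * rh a + linA n ?m' b = z))"
    proof (intro sum.cong refl)
      fix a b assume "b \<in> {..<N^n}"
      then have "(a * N^n + b) div N^n = a" "(a * N^n + b) mod N^n = b" using N_pos by auto
      then show "of_bool (linA (Suc n) m (a * N^n + b) = z) = (of_bool (m 0 * rh a + linA n ?m' b = z) :: nat)"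
        using linA_Suc[OF n1] by simp
    qed
    also have "\<dots> = (\<Sum>x\<in>UNIV. \<Sum>b<N^n. of_bool (m 0 * x + linA n ?m' b = z))"
      by (rule sum_rh)
    also have "\<dots> = N^n"
    proof (cases "g dvd m 0")
      case True
      then obtain r where r: "r < Suc n" "\<not> g dvd m r" using Suc.prems by auto
      have "r \<noteq> 0" proof assume "r = 0" then show False using r True by simp qed
      then have "\<exists>r<n. \<not> g dvd ?m' r" using r by (intro exI[of _ "r - 1"]) auto
      then have "\<And>x. (\<Sum>b<N^n. of_bool (m 0 * x + linA n ?m' b = z) :: nat) = N^(n-1)"
        using Suc.IH[OF n1] by (simp only: add_eq_shift)
      then have "(\<Sum>x\<in>UNIV. \<Sum>b<N^n. of_bool (m 0 * x + linA n ?m' b = z) :: nat) = card (UNIV::'a set) * N^(n-1)"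
        by simp
      also have "\<dots> = N^n" using card_UNIV_R n1 by (simp add: power_eq_if)
      finally show ?thesis .
    next
      case False
      have "(\<Sum>x\<in>UNIV. \<Sum>b<N^n. of_bool (m 0 * x + linA n ?m' b = z) :: nat)
         = (\<Sum>b<N^n. \<Sum>x\<in>UNIV. of_bool (m 0 * x = z - linA n ?m' b))"
        by (subst sum.swap) (simp add: eq_diff_eq)
      also have "\<dots> = (\<Sum>b<N^n. 1)" using uniq_sol[OF False] by simp
      finally show ?thesis by simp
    qed
    finally show ?thesis by simp
  qed
qed

lemma UA_set: assumes "n \<ge> 1" "\<exists>r<n. \<not> g dvd m r"
  shows "(\<Sum>c<N^n. of_bool (linA n m c \<in> S) :: nat) = card S * N^(n-1)"
proof -
  have "(\<Sum>c<N^n. of_bool (linA n m c \<in> S) :: nat) = (\<Sum>c<N^n. \<Sum>z\<in>S. of_bool (linA n m c = z))"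
  proof (intro sum.cong refl)
    fix c
    have "(\<Sum>z\<in>S. of_bool (linA n m c = z) :: nat) = card (S \<inter> {z. linA n m c = z})"
      by (simp add: sum_of_bool_eq)
    also have "\<dots> = of_bool (linA n m c \<in> S)" by (cases "linA n m c \<in> S") auto
    finally show "of_bool (linA n m c \<in> S) = (\<Sum>z\<in>S. of_bool (linA n m c = z) :: nat)" by simp
  qed
  also have "\<dots> = (\<Sum>z\<in>S. \<Sum>c<N^n. of_bool (linA n m c = z))" by (rule sum.swap)
  also have "\<dots> = (\<Sum>z\<in>S. N^(n-1))" using UA[OF assms] by simp
  finally show ?thesis by simp
qed

end


context cr begin

abbreviation "nb \<equiv> nbeta N M"

lemma nb_pos: "k \<ge> 1 \<Longrightarrow> nb k > 0"
proof (induction k rule: nat_less_induct)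
  case (1 k)
  then obtain k' where k: "k = Suc k'" by (cases k) auto
  show ?case using N_pos by (cases k') (simp_all add: k)
qed

lemma nb_Suc: "K \<ge> 1 \<Longrightarrow> nb (Suc K) = N^K + M * nb K"
  by (cases K) auto

lemma linB_A: assumes "K \<ge> 1" "c < N^K"
  shows "linB (Suc K) l c = l 0 + linA K (\<lambda>r. l (Suc r)) c"
proof -
  obtain K' where K: "K = Suc K'" using assms by (cases K) auto
  show ?thesis unfolding linB_def linA_def sum.lessThan_Suc_shift using assms(2) by (simp add: K)
qed

lemma linB_B: assumes "K \<ge> 1" "w < nb K"
  shows "linB (Suc K) l (N^K + (j * nb K + w)) = l 0 * ag j + linB K (\<lambda>r. l (Suc r)) w"
proof -
  obtain K' where K: "K = Suc K'" using assms by (cases K) auto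
  have d: "(j * nb K + w) div nb K = j" "(j * nb K + w) mod nb K = w" using assms(2) by auto
  show ?thesis unfolding linB_def sum.lessThan_Suc_shift using d by (simp add: K Let_def)
qed

lemma linA_dvd: "\<forall>r<n. g dvd m r \<Longrightarrow> g dvd linA n m c"
  unfolding linA_def by (intro dvd_sum) auto

lemma linB_dvd: "\<forall>r<n. g dvd m r \<Longrightarrow> g dvd linB n m c"
  unfolding linB_def by (intro dvd_sum) auto

lemma split_B: assumes "K \<ge> 1"
  shows "(\<Sum>c<nb (Suc K). F c :: nat) = (\<Sum>c<N^K. F c) + (\<Sum>j<M. \<Sum>w<nb K. F (N^K + (j * nb K + w)))"
  unfolding nb_Suc[OF assms] sum_add_split sum_mult_split ..

lemma M_le_N: "M \<le> N"
  using q_ge2 by (intro power_increasing) auto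

lemma WB: "k \<ge> 1 \<Longrightarrow> (\<exists>r<k. \<not> g dvd l r) \<Longrightarrow>
   (\<Sum>c<nb k. of_bool (\<not> g dvd linB k l c) :: nat) = N^(k-1)"
proof (induction k arbitrary: l)
  case 0 then show ?case by simp
next
  case (Suc K)
  show ?case
  proof (cases "K = 0")
    case True
    then have "\<not> g dvd l 0" using Suc.prems by auto
    then show ?thesis using True by (simp add: linB_def)
  next
    case False
    then have K1: "K \<ge> 1" by simp
    let ?l' = "\<lambda>r. l (Suc r)"
    let ?F = "\<lambda>c. of_bool (\<not> g dvd linB (Suc K) l c) :: nat"
    have blA: "(\<Sum>c<N^K. ?F c) = (\<Sum>c<N^K. of_bool (\<not> g dvd (l 0 + linA K ?l' c)))"
      using linB_A[OF K1] by (intro sum.cong refl) simp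
    have blB: "(\<Sum>j<M. \<Sum>w<nb K. ?F (N^K + (j * nb K + w)))
        = (\<Sum>j<M. \<Sum>w<nb K. of_bool (\<not> g dvd (l 0 * ag j + linB K ?l' w)))"
      using linB_B[OF K1] by (intro sum.cong refl) simp
    have agd: "\<And>j. j \<in> {..<M} \<Longrightarrow> g dvd l 0 * ag j" using agam_in by simp
    have "(\<Sum>c<nb (Suc K). ?F c) = (\<Sum>c<N^K. ?F c) + (\<Sum>j<M. \<Sum>w<nb K. ?F (N^K + (j * nb K + w)))"
      by (rule split_B[OF K1])
    also have "\<dots> = N^K"
    proof (cases "\<exists>r<K. \<not> g dvd ?l' r")
      case True
      let ?S = "{z. \<not> g dvd (l 0 + z)}"
      have "bij_betw (\<lambda>z. l 0 + z) ?S {x. \<not> g dvd x}"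
        by (rule bij_betw_byWitness[where f'="\<lambda>x. x - l 0"]) auto
      then have "card ?S = card {x. \<not> g dvd x}" by (rule bij_betw_same_card)
      then have cS: "card ?S = N - M" using card_nondvd by simp
      have A: "(\<Sum>c<N^K. of_bool (\<not> g dvd (l 0 + linA K ?l' c)) :: nat) = (N - M) * N^(K-1)"
        using UA_set[OF K1 True, of ?S] cS by simp
      have B: "(\<Sum>j<M. \<Sum>w<nb K. of_bool (\<not> g dvd (l 0 * ag j + linB K ?l' w)) :: nat) = M * N^(K-1)"
      proof -
        have "(\<Sum>j<M. \<Sum>w<nb K. of_bool (\<not> g dvd (l 0 * ag j + linB K ?l' w)) :: nat)
            = (\<Sum>j<M. \<Sum>w<nb K. of_bool (\<not> g dvd linB K ?l' w))"
        proof (intro sum.cong refl)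
          fix j w assume "j \<in> {..<M}"
          then have "g dvd l 0 * ag j" by (rule agd)
          then show "of_bool (\<not> g dvd (l 0 * ag j + linB K ?l' w)) = (of_bool (\<not> g dvd linB K ?l' w) :: nat)"
            by (simp add: dvd_add_right_iff)
        qed
        also have "\<dots> = (\<Sum>j<M. N^(K-1))" using Suc.IH[OF K1 True] by simp
        finally show ?thesis by simp
      qed
      have "(N - M) * N^(K-1) + M * N^(K-1) = N * N^(K-1)" using M_le_N
        by (simp add: add_mult_distrib[symmetric])
      also have "\<dots> = N^K" using K1 by (simp add: power_eq_if)
      finally show ?thesis using A B blA blB by simp
    next
      case False
      then have all: "\<forall>r<K. g dvd ?l' r" by simp
      have l0: "\<not> g dvd l 0"
      proof
        assume h: "g dvd l 0"
        obtain r where r: "r < Suc K" "\<not> g dvd l r" using Suc.prems by auto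
        show False
        proof (cases r)
          case 0 then show False using h r by simp
        next
          case (Suc r') then show False using all r by auto
        qed
      qed
      have A: "(\<Sum>c<N^K. of_bool (\<not> g dvd (l 0 + linA K ?l' c)) :: nat) = N^K"
      proof -
        have "\<And>c. \<not> g dvd (l 0 + linA K ?l' c)"
          using l0 linA_dvd[OF all] by (simp add: dvd_add_left_iff)
        then show ?thesis by simp
      qed
      have B: "(\<Sum>j<M. \<Sum>w<nb K. of_bool (\<not> g dvd (l 0 * ag j + linB K ?l' w)) :: nat) = 0"
      proof -
        have "\<And>j w. j \<in> {..<M} \<Longrightarrow> g dvd (l 0 * ag j + linB K ?l' w)"
          using agd linB_dvd[OF all] by (simp add: dvd_add)
        then show ?thesis by simp
      qed
      show ?thesis using A B blA blB by simp
    qed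
    finally show ?thesis by simp
  qed
qed

end


lemma geo: "(q::nat) \<ge> 1 \<Longrightarrow> (q - 1) * (\<Sum>i<m. q^i) + 1 = q^m"
proof (induction m)
  case 0 then show ?case by simp
next
  case (Suc m)
  have "(q - 1) * (\<Sum>i<Suc m. q^i) + 1 = ((q - 1) * (\<Sum>i<m. q^i) + 1) + (q - 1) * q^m"
    by (simp add: algebra_simps)
  also have "\<dots> = q^m + (q - 1) * q^m" using Suc by simp
  also have "\<dots> = q * q^m" using Suc.prems by (cases q) auto
  finally show ?case by simp
qed

lemma geo_div: "(q::nat) \<ge> 2 \<Longrightarrow> (q^m - 1) div (q - 1) = (\<Sum>i<m. q^i)"
proof -
  assume q: "q \<ge> 2"
  then have "q^m - 1 = (q - 1) * (\<Sum>i<m. q^i)" using geo[of q m] by simp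
  then show ?thesis using q by simp
qed

lemma L_diff: assumes q: "q \<ge> 2" and s: "s \<ge> 1" and k: "k \<ge> 2"
  shows "L_beta q s k - q ^ (s - 1) * L_beta q s (k - 1) = q ^ (s * (k - 1))"
proof -
  obtain k' where k': "k = Suc (Suc k')" using k by (metis add_2_eq_Suc le_Suc_ex)
  let ?S = "\<lambda>m. (\<Sum>i<m. q^i)"
  have L1: "L_beta q s k = q^((s-1)*Suc k') * (?S (Suc k') + q^Suc k')"
    unfolding L_beta_def geo_div[OF q] k' by simp
  have "q^(s-1) * L_beta q s (k-1) = q^(s-1) * (q^((s-1)*k') * ?S (Suc k'))"
    unfolding L_beta_def geo_div[OF q] k' by simp
  also have "\<dots> = q^((s-1)*Suc k') * ?S (Suc k')"
    by (simp add: power_add[symmetric] mult.assoc[symmetric] add.commute)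
  finally have L2: "q^(s-1) * L_beta q s (k-1) = q^((s-1)*Suc k') * ?S (Suc k')" .
  have "L_beta q s k - q ^ (s - 1) * L_beta q s (k - 1) = q^((s-1)*Suc k') * q^Suc k'"
    unfolding L1 L2 by (simp add: add_mult_distrib2)
  also have "\<dots> = q^((s-1)*Suc k' + Suc k')" by (simp add: power_add)
  also have "(s-1)*Suc k' + Suc k' = s * (k - 1)" using s k' by (cases s) auto
  finally show ?thesis .
qed

lemma hamming_map: "hamming (map f [0..<n]) (map h [0..<n]) = card {c. c < n \<and> f c \<noteq> h c}"
  unfolding hamming_def by (rule arg_cong[where f=card]) auto

context cr begin

lemma decomp: assumes "\<exists>r<k. l r \<noteq> 0"
  shows "\<exists>t l'. t < s \<and> (\<forall>r<k. l r = g^t * l' r) \<and> (\<exists>r<k. \<not> g dvd l' r)"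
proof -
  let ?P = "\<lambda>t. t \<le> s \<and> (\<forall>r<k. g^t dvd l r)"
  have P0: "?P 0" by simp
  have bnd: "\<And>t. ?P t \<Longrightarrow> t \<le> s" by simp
  define T where "T = Greatest ?P"
  have PT: "?P T" unfolding T_def using GreatestI_nat[of ?P 0 s] P0 bnd by blast
  have Tge: "\<And>t. ?P t \<Longrightarrow> t \<le> T" unfolding T_def using Greatest_le_nat[of ?P _ s] bnd by blast
  have Tlt: "T < s"
  proof (rule ccontr)
    assume "\<not> T < s"
    then have "T = s" using PT by simp
    then have "\<forall>r<k. l r = 0" using PT nil1 by simp
    then show False using assms by blast
  qed
  define l' where "l' = (\<lambda>r. SOME w. l r = g^T * w)"
  have l': "\<forall>r<k. l r = g^T * l' r"
  proof (intro allI impI)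
    fix r assume "r < k"
    then have "\<exists>w. l r = g^T * w" using PT by (auto simp: dvd_def)
    then show "l r = g^T * l' r" unfolding l'_def by (rule someI_ex)
  qed
  have "\<exists>r<k. \<not> g dvd l' r"
  proof (rule ccontr)
    assume "\<not> (\<exists>r<k. \<not> g dvd l' r)"
    then have "\<forall>r<k. g dvd l' r" by simp
    then have "\<forall>r<k. g^Suc T dvd l r"
    proof (intro allI impI)
      fix r assume a: "\<forall>r<k. g dvd l' r" and r: "r < k"
      have "g^T * g dvd g^T * l' r" using a r by (intro mult_dvd_mono) auto
      then show "g^Suc T dvd l r" using l' r by (metis power_Suc2)
    qed
    then have "?P (Suc T)" using Tlt by simp
    then show False using Tge by fastforce
  qed
  then show ?thesis using Tlt l' by blast
qed

lemma weight_lb: assumes "k \<ge> 1" "\<exists>r<k. l r \<noteq> 0"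
  shows "N^(k-1) \<le> card {c. c < nb k \<and> linB k l c \<noteq> 0}"
proof -
  obtain t l' where tl: "t < s" "\<forall>r<k. l r = g^t * l' r" "\<exists>r<k. \<not> g dvd l' r"
    using decomp[OF assms(2)] by blast
  have eq: "linB k l c = g^t * linB k l' c" for c
    unfolding linB_def sum_distrib_left using tl(2) by (intro sum.cong refl) (simp add: mult.assoc)
  have "N^(k-1) = (\<Sum>c<nb k. of_bool (\<not> g dvd linB k l' c) :: nat)" using WB[OF assms(1) tl(3)] by simp
  also have "\<dots> = card {c. c < nb k \<and> \<not> g dvd linB k l' c}" by (rule cnt_card)
  also have "\<dots> \<le> card {c. c < nb k \<and> linB k l c \<noteq> 0}"
  proof (rule card_mono)
    show "{c. c < nb k \<and> \<not> g dvd linB k l' c} \<subseteq> {c. c < nb k \<and> linB k l c \<noteq> 0}"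
    proof
      fix c assume "c \<in> {c. c < nb k \<and> \<not> g dvd linB k l' c}"
      then have "c < nb k" "\<not> g dvd linB k l' c" by auto
      then show "c \<in> {c. c < nb k \<and> linB k l c \<noteq> 0}" using nonzero[OF _ tl(1)] eq by simp
    qed
  qed simp
  finally show ?thesis .
qed

lemma weight_min: assumes "k \<ge> 2"
  shows "card {c. c < nb k \<and> linB k (\<lambda>r. if r = 0 then g^(s-1) else 0) c \<noteq> 0} = N^(k-1)"
proof -
  obtain K where K: "k = Suc K" "K \<ge> 1" using assms by (cases k) auto
  let ?l = "\<lambda>r. if r = 0 then g^(s-1) else (0::'a)"
  have z: "(\<lambda>r. ?l (Suc r)) = (\<lambda>r. 0)" by simp
  have zA: "linA K (\<lambda>r. 0) c = 0" for c by (simp add: linA_def)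
  have zB: "linB K (\<lambda>r. 0) c = 0" for c by (simp add: linB_def)
  have "{c. c < nb k \<and> linB k ?l c \<noteq> 0} = {c. c < N^K}"
  proof (intro set_eqI iffI)
    fix c assume "c \<in> {c. c < nb k \<and> linB k ?l c \<noteq> 0}"
    then have c: "c < N^K + M * nb K" "linB (Suc K) ?l c \<noteq> 0" using nb_Suc[OF K(2)] K by auto
    show "c \<in> {c. c < N^K}"
    proof (rule ccontr)
      assume "c \<notin> {c. c < N^K}"
      then obtain c' where c': "c = N^K + c'" "c' < M * nb K" using c(1)
        by (metis add_less_cancel_left le_add_diff_inverse mem_Collect_eq not_le)
      define j where "j = c' div nb K"
      define w where "w = c' mod nb K"
      have npos: "nb K > 0" using nb_pos K(2) by simp
      have cw: "c' = j * nb K + w" "w < nb K" unfolding j_def w_def using npos by simp_all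
      have jM: "j < M" using c'(2) npos unfolding j_def by (simp add: div_less_iff_less_mult)
      obtain v where v: "ag j = g * v" using agam_in[OF jM] by (auto simp: dvd_def)
      have "linB (Suc K) ?l c = g^(s-1) * ag j" unfolding c'(1) cw(1)
        using linB_B[OF K(2) cw(2)] z zB by simp
      also have "\<dots> = g^s * v" using v s_pos
        by (simp add: mult.assoc[symmetric] power_Suc2[symmetric])
      also have "\<dots> = 0" using nil1 by simp
      finally show False using c(2) by simp
    qed
  next
    fix c assume "c \<in> {c. c < N^K}"
    then have c: "c < N^K" by simp
    have "linB (Suc K) ?l c = g^(s-1)" using linB_A[OF K(2) c] z zA by simp
    then show "c \<in> {c. c < nb k \<and> linB k ?l c \<noteq> 0}"
      using c nil2 nb_Suc[OF K(2)] K by simp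
  qed
  then show ?thesis using K by simp
qed

lemma main: assumes "k \<ge> 2" shows "min_dist (S_beta g s q e k) = q^(s*(k-1))"
proof -
  let ?C = "S_beta g s q e k"
  have C: "?C = {map (linB k l) [0..<nb k] | l. True}"
  proof -
    have "\<And>l. linB k l = (\<lambda>c. \<Sum>r<k. l r * Gbeta rh ag N M k r c)" by (rule ext) (simp add: linB_def)
    then show ?thesis by (simp add: S_beta_def row_span_def)
  qed
  let ?H = "{hamming x y | x y. x \<in> ?C \<and> y \<in> ?C \<and> x \<noteq> y}"
  have k1: "k \<ge> 1" using assms by simp
  have fin: "finite ?H"
  proof (rule finite_subset)
    show "?H \<subseteq> {..nb k}"
    proof
      fix h assume "h \<in> ?H"
      then obtain x y where xy: "h = hamming x y" "x \<in> ?C" by blast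
      then have lx: "length x = nb k" using C by auto
      have "hamming x y \<le> card {..<length x}" unfolding hamming_def by (rule card_mono) auto
      then show "h \<in> {..nb k}" using xy lx by simp
    qed
  qed simp
  have lb: "N^(k-1) \<le> h" if "h \<in> ?H" for h
  proof -
    obtain x y where xy: "h = hamming x y" "x \<in> ?C" "y \<in> ?C" "x \<noteq> y" using \<open>h \<in> ?H\<close> by blast
    obtain l1 l2 where l: "x = map (linB k l1) [0..<nb k]" "y = map (linB k l2) [0..<nb k]"
      using xy C by blast
    let ?l = "\<lambda>r. l1 r - l2 r"
    have diff: "linB k ?l c = linB k l1 c - linB k l2 c" for c
      unfolding linB_def by (simp add: sum_subtractf left_diff_distrib)
    have "\<exists>r<k. ?l r \<noteq> 0"
    proof (rule ccontr)
      assume "\<not> (\<exists>r<k. ?l r \<noteq> 0)"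
      then have "\<forall>r<k. l1 r = l2 r" by simp
      then have "linB k l1 = linB k l2" unfolding linB_def by (intro ext sum.cong refl) simp
      then show False using xy l by simp
    qed
    then have "N^(k-1) \<le> card {c. c < nb k \<and> linB k ?l c \<noteq> 0}" by (rule weight_lb[OF k1])
    also have "{c. c < nb k \<and> linB k ?l c \<noteq> 0} = {c. c < nb k \<and> linB k l1 c \<noteq> linB k l2 c}"
      using diff by simp
    also have "card \<dots> = h" using xy l by (simp add: hamming_map)
    finally show ?thesis .
  qed
  have mem: "N^(k-1) \<in> ?H"
  proof -
    let ?l = "\<lambda>r. if r = 0 then g^(s-1) else (0::'a)"
    let ?x = "map (linB k ?l) [0..<nb k]"
    let ?y = "map (linB k (\<lambda>r. 0)) [0..<nb k]"
    have zB: "linB k (\<lambda>r. 0) c = 0" for c by (simp add: linB_def)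
    have hx: "hamming ?x ?y = N^(k-1)" using weight_min[OF assms] by (simp add: hamming_map zB)
    have "?x \<noteq> ?y"
    proof
      assume "?x = ?y"
      then have "hamming ?x ?y = 0" unfolding hamming_def by simp
      then show False using hx N_pos by simp
    qed
    moreover have "?x \<in> ?C" "?y \<in> ?C" using C by blast+
    ultimately have "N^(k-1) = hamming ?x ?y \<and> ?x \<in> ?C \<and> ?y \<in> ?C \<and> ?x \<noteq> ?y" using hx by simp
    then show ?thesis by (intro CollectI exI)
  qed
  have "min_dist ?C = N^(k-1)" unfolding min_dist_def by (rule Min_eqI[OF fin lb mem])
  then show ?thesis by (simp add: power_mult)
qed

end

theorem corollary3p22:
  fixes g :: "'a::{comm_ring_1,finite}" and s q k :: nat and e :: "nat \<Rightarrow> 'a"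
  assumes chain: "chain_ring TYPE('a)"
    and maxg: "maximal_ideal (principal_ideal g)"
    and nil1: "g ^ s = 0" and nil2: "g ^ (s - 1) \<noteq> 0"
    and reps: "\<forall>x. \<exists>!i. i < q \<and> x - e i \<in> principal_ideal g"
    and e0: "e 0 = 0" and e1: "e 1 = 1"
    and k2: "k \<ge> 2"
  shows "min_dist (S_beta g s q e k) = L_beta q s k - q ^ (s - 1) * L_beta q s (k - 1)
       \<and> L_beta q s k - q ^ (s - 1) * L_beta q s (k - 1) = q ^ (s * (k - 1))"
proof -
  interpret cr g s q e using maxg nil1 nil2 reps e0 e1 by unfold_locales
  have m: "min_dist (S_beta g s q e k) = q^(s*(k-1))" using main k2 .
  have "s \<ge> 1" using s_pos by simp
  then have l: "L_beta q s k - q ^ (s - 1) * L_beta q s (k - 1) = q ^ (s * (k - 1))"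
    using L_diff q_ge2 k2 by blast
  show ?thesis using m l by simp
qed

end
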